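(* Let $G=(V,E,w)$ be a connected undirected graph with positive edge weights, let $v\in V$, let $E_v$ be a set of node pairs $\{u,v\}$ with $u\neq v$ and $\{u,v\}\notin E$, each $e\in E_v$ having a given positive weight $w(e)$, and let $k\le |E_v|$ be a positive integer. For $S\subseteq E_v$ let $\mathcal{R}(S)$ be the resistance distance of $v$ in $G(S)$. Consider the greedy procedure: start with $S=\emptyset$; for $i=1,\dots,k$, choose $e_i\in E_v\setminus S$ maximizing $\mathcal{R}(S)-\mathcal{R}(S\cup\{e\})$ over $e\in E_v\setminus S$ (ties broken arbitrarily) and set $S\leftarrow S\cup\{e_i\}$. Then the returned set $S$ (with $|S|=k$) satisfies $$\mathcal{R}(\emptyset)-\mathcal{R}(S)\ge\left(1-\frac{1}{e}\right)\left(\mathcal{R}(\emptyset)-\mathcal{R}(S^* )\right),$$ where $S^*$ is a minimizer of $\mathcal{R}(S')$ over all $S'\subseteq E_v$ with $|S'|=k$, and $e$ in $1-\frac1e$ is Euler's number.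
   Context: For a connected weighted graph $H$ on node set $V$, its Laplacian is $\mathbf{L}=\mathbf{D}-\mathbf{A}$ ($\mathbf{A}$ weighted adjacency matrix, $\mathbf{D}$ diagonal weighted degree matrix), with Moore–Penrose pseudoinverse $\mathbf{L}^\dagger$. The resistance distance between nodes $a,b$ is $\mathcal{R}_{ab}=(\mathbf{e}_a-\mathbf{e}_b)^\top\mathbf{L}^\dagger(\mathbf{e}_a-\mathbf{e}_b)$, and the resistance distance of node $v$ is $\mathcal{R}_v=\sum_{u\in V}\mathcal{R}_{uv}$. For $S\subseteq E_v$, $G(S)=(V,E\cup S,w')$ is the graph obtained from $G$ by adding the edges of $S$ with their given weights. *)

theory Defs
  imports "HOL-Analysis.Analysis"
begin

text \<open>Vertices form a finite type 'n. A weighted undirected graph is given by a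
symmetric weight function w, with an edge {a,b} present iff w a b > 0.\<close>

definition weighted_graph :: "('n \<Rightarrow> 'n \<Rightarrow> real) \<Rightarrow> bool" where
  "weighted_graph w \<longleftrightarrow> (\<forall>a b. w a b = w b a) \<and> (\<forall>a. w a a = 0) \<and> (\<forall>a b. w a b \<ge> 0)"

definition edges :: "('n \<Rightarrow> 'n \<Rightarrow> real) \<Rightarrow> 'n set set" where
  "edges w = {{a, b} | a b. w a b > 0}"

definition connected_graph :: "('n \<Rightarrow> 'n \<Rightarrow> real) \<Rightarrow> bool" where
  "connected_graph w \<longleftrightarrow> (\<forall>a b. (a, b) \<in> ({(x, y). w x y > 0})\<^sup>*)"

definition weighted_adj :: "('n::finite \<Rightarrow> 'n \<Rightarrow> real) \<Rightarrow> real^'n^'n" where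
  "weighted_adj w = (\<chi> i j. w i j)"

definition degree_mat :: "('n::finite \<Rightarrow> 'n \<Rightarrow> real) \<Rightarrow> real^'n^'n" where
  "degree_mat w = (\<chi> i j. if i = j then (\<Sum>k\<in>UNIV. w i k) else 0)"

definition laplacian :: "('n::finite \<Rightarrow> 'n \<Rightarrow> real) \<Rightarrow> real^'n^'n" where
  "laplacian w = degree_mat w - weighted_adj w"

definition is_pinv :: "real^'n::finite^'n \<Rightarrow> real^'n^'n \<Rightarrow> bool" where
  "is_pinv A X \<longleftrightarrow> A ** X ** A = A \<and> X ** A ** X = X \<and>
     transpose (A ** X) = A ** X \<and> transpose (X ** A) = X ** A"

definition pinv :: "real^'n::finite^'n \<Rightarrow> real^'n^'n" where
  "pinv A = (THE X. is_pinv A X)"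

definition unit_vec :: "'n::finite \<Rightarrow> real^'n" where
  "unit_vec a = (\<chi> i. if i = a then 1 else 0)"

definition resistance :: "('n::finite \<Rightarrow> 'n \<Rightarrow> real) \<Rightarrow> 'n \<Rightarrow> 'n \<Rightarrow> real" where
  "resistance w a b = (unit_vec a - unit_vec b) \<bullet> (pinv (laplacian w) *v (unit_vec a - unit_vec b))"

definition node_resistance :: "('n::finite \<Rightarrow> 'n \<Rightarrow> real) \<Rightarrow> 'n \<Rightarrow> real" where
  "node_resistance w v = (\<Sum>u\<in>UNIV. resistance w u v)"

definition add_edges :: "('n \<Rightarrow> 'n \<Rightarrow> real) \<Rightarrow> ('n set \<Rightarrow> real) \<Rightarrow> 'n set set \<Rightarrow> ('n \<Rightarrow> 'n \<Rightarrow> real)" where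
  "add_edges w we S = (\<lambda>a b. w a b + (if a \<noteq> b \<and> {a, b} \<in> S then we {a, b} else 0))"

definition greedy_run :: "('n set set \<Rightarrow> real) \<Rightarrow> 'n set set \<Rightarrow> nat \<Rightarrow> 'n set list \<Rightarrow> bool" where
  "greedy_run R Ev k es \<longleftrightarrow> length es = k \<and>
     (\<forall>i<k. es ! i \<in> Ev - set (take i es) \<and>
        (\<forall>e \<in> Ev - set (take i es).
           R (set (take i es)) - R (set (take i es) \<union> {e})
             \<le> R (set (take i es)) - R (set (take i es) \<union> {es ! i})))"

end

theory Submission
  imports Defs
begin


definition gmat :: "('n::finite \<Rightarrow> 'n \<Rightarrow> real) \<Rightarrow> 'n \<Rightarrow> real^'n^'n" where
  "gmat w v = (\<chi> i j. if i = v \<or> j = v then (if i = j then 1 else 0)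
      else (if i = j then (\<Sum>k\<in>UNIV. w i k) else 0) - w i j)"

lemma gmat_nth: "gmat w v $ i $ j = (if i = v \<or> j = v then (if i = j then 1 else 0)
      else (if i = j then (\<Sum>k\<in>UNIV. w i k) else 0) - w i j)"
  by (simp add: gmat_def)

lemma gmat_mulv_v: "(gmat w v *v x) $ v = x $ v"
proof -
  have "(gmat w v *v x) $ v = (\<Sum>j\<in>UNIV. if j = v then x $ j else 0)"
    unfolding matrix_vector_mult_def vec_lambda_beta by (intro sum.cong) (auto simp: gmat_nth)
  thus ?thesis by (simp add: sum.delta)
qed

lemma gmat_mulv_i:
  assumes "i \<noteq> v"
  shows "(gmat w v *v x) $ i = (\<Sum>k\<in>UNIV. w i k * (x$i - (if k = v then 0 else x$k)))"
proof -
  have "(gmat w v *v x) $ i = (\<Sum>j\<in>UNIV. (if j = v then 0 else (if i = j then (\<Sum>k\<in>UNIV. w i k) else 0) - w i j) * x$j)"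
    using assms by (simp add: matrix_vector_mult_def gmat_nth) (intro sum.cong, auto)
  also have "\<dots> = (\<Sum>j\<in>UNIV. (if i = j then (\<Sum>k\<in>UNIV. w i k) * x$j else 0) - w i j * (if j = v then 0 else x$j))"
    using assms by (intro sum.cong) (auto simp: algebra_simps)
  also have "\<dots> = (\<Sum>k\<in>UNIV. w i k) * x$i - (\<Sum>j\<in>UNIV. w i j * (if j = v then 0 else x$j))"
    by (simp add: sum_subtractf)
  also have "\<dots> = (\<Sum>k\<in>UNIV. w i k * (x$i - (if k = v then 0 else x$k)))"
    by (simp add: sum_distrib_right sum_subtractf right_diff_distrib)
  finally show ?thesis .
qed

lemma min_principle:
  fixes w :: "'n::finite \<Rightarrow> 'n \<Rightarrow> real"
  assumes conn: "connected_graph w" and nn: "\<forall>a b. w a b \<ge> 0"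
    and ge: "\<forall>i. (gmat w v *v x) $ i \<ge> 0"
  shows "x $ i \<ge> 0"
proof (rule ccontr)
  assume neg: "\<not> x $ i \<ge> 0"
  define m where "m = Min (range (\<lambda>j. x $ j))"
  have mle: "m \<le> x $ j" for j unfolding m_def by (intro Min_le) auto
  have "m \<in> range (\<lambda>j. x $ j)" unfolding m_def by (intro Min_in) auto
  then obtain j0 where j0: "x $ j0 = m" by auto
  have mneg: "m < 0" using mle[of i] neg by linarith
  have xv: "x $ v \<ge> 0" using ge gmat_mulv_v[of w v x] by metis
  have clos: "x $ k = m" if "x $ j = m" "w j k > 0" for j k
  proof -
    have jv: "j \<noteq> v" using that xv mneg by auto
    let ?t = "\<lambda>k. w j k * ((if k = v then 0 else x$k) - m)"
    have tn: "\<forall>k\<in>UNIV. ?t k \<ge> 0"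
    proof
      fix k show "?t k \<ge> 0" using nn mle[of k] mneg by (auto intro!: mult_nonneg_nonneg)
    qed
    have "(\<Sum>k\<in>UNIV. ?t k) = - (gmat w v *v x) $ j"
      using gmat_mulv_i[OF jv, of w x] that(1)
      by (simp add: sum_negf[symmetric] algebra_simps)
    also have "\<dots> \<le> 0" using ge by (simp)
    finally have "(\<Sum>k\<in>UNIV. ?t k) \<le> 0" .
    moreover have "0 \<le> (\<Sum>k\<in>UNIV. ?t k)" by (rule sum_nonneg) (use tn in auto)
    ultimately have "(\<Sum>k\<in>UNIV. ?t k) = 0" by linarith
    hence "?t k = 0" using sum_nonneg_eq_0_iff[of UNIV ?t] tn by auto
    hence "(if k = v then 0 else x$k) = m" using that(2) by simp
    thus ?thesis using mneg by (auto split: if_splits)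
  qed
  have "(j0, v) \<in> ({(x, y). w x y > 0})\<^sup>*" using conn unfolding connected_graph_def by blast
  hence "x $ v = m"
  proof (induction rule: rtrancl_induct)
    case base then show ?case using j0 .
  next
    case (step y z) then show ?case using clos by auto
  qed
  thus False using xv mneg by simp
qed


lemma gmat_left_inv:
  fixes w :: "'n::finite \<Rightarrow> 'n \<Rightarrow> real"
  assumes conn: "connected_graph w" and nn: "\<forall>a b. w a b \<ge> 0"
  shows "\<exists>B. B ** gmat w v = mat 1"
proof -
  have "x = 0" if "gmat w v *v x = 0" for x
  proof -
    have "\<forall>i. (gmat w v *v x) $ i \<ge> 0" using that by simp
    hence a: "x $ i \<ge> 0" for i using min_principle[OF conn nn] by blast
    have "gmat w v *v (-x) = 0" using that matrix_vector_mult_diff_distrib[of "gmat w v" 0 x] by simp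
    hence "\<forall>i. (gmat w v *v (-x)) $ i \<ge> 0" by simp
    hence b: "(-x) $ i \<ge> 0" for i using min_principle[OF conn nn] by blast
    show ?thesis using a b by (simp add: vec_eq_iff) (meson antisym neg_0_le_iff_le)
  qed
  thus ?thesis using matrix_left_invertible_ker by blast
qed

lemma gmat_inv:
  fixes w :: "'n::finite \<Rightarrow> 'n \<Rightarrow> real"
  assumes conn: "connected_graph w" and nn: "\<forall>a b. w a b \<ge> 0"
  shows "gmat w v ** matrix_inv (gmat w v) = mat 1 \<and> matrix_inv (gmat w v) ** gmat w v = mat 1"
proof -
  obtain B where "B ** gmat w v = mat 1" using gmat_left_inv[OF conn nn] by blast
  hence "gmat w v ** B = mat 1 \<and> B ** gmat w v = mat 1" using matrix_left_right_inverse by blast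
  thus ?thesis unfolding matrix_inv_def by (rule someI)
qed

lemma gmat_inv_nonneg:
  fixes w :: "'n::finite \<Rightarrow> 'n \<Rightarrow> real"
  assumes conn: "connected_graph w" and nn: "\<forall>a b. w a b \<ge> 0"
  shows "matrix_inv (gmat w v) $ i $ j \<ge> 0"
proof -
  let ?X = "matrix_inv (gmat w v)"
  let ?y = "?X *v axis j 1"
  have "gmat w v *v ?y = axis j 1"
    using gmat_inv[OF conn nn] by (simp add: matrix_vector_mul_assoc)
  hence "\<forall>i. (gmat w v *v ?y) $ i \<ge> 0" by (simp add: axis_def)
  hence "?y $ i \<ge> 0" using min_principle[OF conn nn] by blast
  moreover have "?y $ i = ?X $ i $ j"
    by (simp add: matrix_vector_mult_def axis_def if_distrib cong: if_cong)
  ultimately show ?thesis by simp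
qed

lemma pinv_unique:
  fixes A X Y :: "real^'n::finite^'n"
  assumes "is_pinv A X" "is_pinv A Y"
  shows "X = Y"
proof -
  have x1: "A ** X ** A = A" and x2: "X ** A ** X = X" and x3: "transpose (A ** X) = A ** X"
    and x4: "transpose (X ** A) = X ** A" using assms(1) unfolding is_pinv_def by auto
  have y1: "A ** Y ** A = A" and y2: "Y ** A ** Y = Y" and y3: "transpose (A ** Y) = A ** Y"
    and y4: "transpose (Y ** A) = Y ** A" using assms(2) unfolding is_pinv_def by auto
  have "X = X ** (A ** X)" using x2 by (simp add: matrix_mul_assoc)
  also have "\<dots> = X ** transpose (A ** X)" using x3 by simp
  also have "\<dots> = X ** transpose X ** transpose A" by (simp add: matrix_transpose_mul matrix_mul_assoc)
  also have "transpose A = transpose (A ** Y ** A)" using y1 by simp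
  also have "X ** transpose X ** transpose (A ** Y ** A) = X ** (transpose (A ** X) ** transpose (A ** Y))"
    by (simp add: matrix_transpose_mul matrix_mul_assoc)
  also have "\<dots> = X ** (A ** X ** (A ** Y))" using x3 y3 by (simp add: matrix_mul_assoc)
  also have "\<dots> = X ** A ** Y" using x1 by (simp add: matrix_mul_assoc)
  finally have X: "X = X ** A ** Y" .
  have "Y = (Y ** A) ** Y" using y2 by (simp add: matrix_mul_assoc)
  also have "\<dots> = transpose (Y ** A) ** Y" using y4 by simp
  also have "\<dots> = transpose A ** transpose Y ** Y" by (simp add: matrix_transpose_mul matrix_mul_assoc)
  also have "transpose A = transpose (A ** X ** A)" using x1 by simp
  also have "transpose (A ** X ** A) ** transpose Y ** Y = (transpose (X ** A) ** transpose (Y ** A)) ** Y"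
    by (simp add: matrix_transpose_mul matrix_mul_assoc)
  also have "\<dots> = X ** A ** (Y ** A ** Y)" using x4 y4 by (simp add: matrix_mul_assoc)
  also have "\<dots> = X ** A ** Y" using y2 by simp
  finally show ?thesis using X by simp
qed


lemma matrix_sub_rdistrib: "((A::real^'m^'n) - B) ** C = A ** C - B ** C"
  by (simp add: matrix_matrix_mult_def vec_eq_iff sum_subtractf left_diff_distrib)

lemma matrix_sub_ldistrib: "(A::real^'m^'n) ** (B - C) = A ** B - A ** C"
  by (simp add: matrix_matrix_mult_def vec_eq_iff sum_subtractf right_diff_distrib)

lemma sum_Pr: "(\<Sum>k\<in>(UNIV::'n::finite set). (f k :: real) * ((if k = j then 1 else 0) - c)) = f j - c * (\<Sum>k\<in>UNIV. f k)"
proof -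
  have "(\<Sum>k\<in>(UNIV::'n set). f k * ((if k = j then 1 else 0) - c)) = (\<Sum>k\<in>UNIV. (if k = j then f k else 0) - c * f k)"
    by (intro sum.cong) (auto simp: right_diff_distrib)
  also have "\<dots> = f j - c * (\<Sum>k\<in>UNIV. f k)" by (simp add: sum_subtractf sum_distrib_left)
  finally show ?thesis .
qed

lemma sum_Pl: "(\<Sum>k\<in>(UNIV::'n::finite set). ((if i = k then 1 else 0) - c) * (f k :: real)) = f i - c * (\<Sum>k\<in>UNIV. f k)"
proof -
  have "(\<Sum>k\<in>(UNIV::'n set). ((if i = k then 1 else 0) - c) * f k) = (\<Sum>k\<in>UNIV. (if i = k then f k else 0) - c * f k)"
    by (intro sum.cong) (auto simp: left_diff_distrib)
  also have "\<dots> = f i - c * (\<Sum>k\<in>UNIV. f k)" by (simp add: sum_subtractf sum_distrib_left)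
  finally show ?thesis .
qed

lemma unit_vec_axis: "unit_vec a = axis a 1"
  by (simp add: unit_vec_def axis_def)

lemma quad_unit:
  fixes M :: "real^'n::finite^'n"
  shows "(unit_vec a - unit_vec b) \<bullet> (M *v (unit_vec a - unit_vec b)) = M$a$a - M$a$b - M$b$a + M$b$b"
proof -
  have col: "(M *v axis c 1) $ i = M $ i $ c" for c i
    by (simp add: matrix_vector_mult_def axis_def if_distrib cong: if_cong)
  show ?thesis
    by (simp add: unit_vec_axis matrix_vector_mult_diff_distrib inner_diff_left inner_diff_right
        inner_axis' col)
qed

lemma laplacian_nth: "laplacian w $ i $ j = (if i = j then (\<Sum>k\<in>UNIV. w i k) else 0) - w i j"
  by (simp add: laplacian_def degree_mat_def weighted_adj_def)

lemma node_res_formula: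
  fixes w :: "'n::finite \<Rightarrow> 'n \<Rightarrow> real"
  assumes wg: "weighted_graph w" and conn: "connected_graph w"
  shows "node_resistance w v = (\<Sum>i\<in>UNIV. matrix_inv (gmat w v) $ i $ i) - 1"
proof -
  have sym: "w a b = w b a" for a b using wg unfolding weighted_graph_def by auto
  have nn: "\<forall>a b. w a b \<ge> 0" using wg unfolding weighted_graph_def by auto
  define X where "X = matrix_inv (gmat w v)"
  define G where "G = gmat w v"
  define L where "L = laplacian w"
  have GX: "G ** X = mat 1" and XG: "X ** G = mat 1"
    using gmat_inv[OF conn nn, of v] unfolding X_def G_def by auto
  have Lnth: "L $ i $ j = (if i = j then (\<Sum>k\<in>UNIV. w i k) else 0) - w i j" for i j
    unfolding L_def by (rule laplacian_nth)
  have Gnth: "G $ i $ j = (if i = v \<or> j = v then (if i = j then 1 else 0) else L $ i $ j)" for i j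
    unfolding G_def by (simp add: gmat_nth Lnth)
  have Lsym: "transpose L = L" by (simp add: vec_eq_iff transpose_def Lnth sym)
  have Gsym: "transpose G = G" by (simp add: vec_eq_iff transpose_def Gnth Lnth sym)
  have "transpose X ** G = mat 1"
    using GX Gsym by (metis matrix_transpose_mul transpose_mat)
  hence Xsym: "transpose X = X"
    by (metis GX matrix_mul_assoc matrix_mul_lid matrix_mul_rid)
  have Xv: "X $ v $ j = (if v = j then 1 else 0)" for j
  proof -
    have "(G ** X) $ v $ j = (\<Sum>k\<in>UNIV. (if k = v then X $ k $ j else 0))"
      unfolding matrix_matrix_mult_def vec_lambda_beta by (intro sum.cong) (auto simp: Gnth)
    also have "\<dots> = X $ v $ j" by simp
    finally show ?thesis using GX by (simp add: mat_def)
  qed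
  have Xv': "X $ i $ v = (if i = v then 1 else 0)" for i
    using Xv[of i] Xsym by (metis transpose_def vec_lambda_beta)
  have Lcol: "(\<Sum>i\<in>UNIV. L $ i $ j) = 0" for j
    by (simp add: Lnth sum_subtractf sum.delta sym)
  have Lrow: "(\<Sum>j\<in>UNIV. L $ i $ j) = 0" for i
    by (simp add: Lnth sum_subtractf sum.delta' sym)
  define H where "H = (\<chi> i j. if i = v \<or> j = v then 0 else X $ i $ j)"
  define E :: "real^'n^'n" where "E = (\<chi> i j. if i = v then 1 else 0)"
  have LH1: "(L ** H) $ i $ j = (if i = j then 1 else 0)" if "i \<noteq> v" "j \<noteq> v" for i j
  proof -
    have "(L ** H) $ i $ j = (G ** X) $ i $ j"
      unfolding matrix_matrix_mult_def using that
      by (simp add: H_def Gnth) (intro sum.cong, auto)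
    thus ?thesis using GX by (simp add: mat_def)
  qed
  have LH: "L ** H = mat 1 - E"
  proof -
    have "(L ** H) $ i $ j = (mat 1 - E) $ i $ j" for i j
    proof (cases "j = v")
      case True
      thus ?thesis by (simp add: matrix_matrix_mult_def H_def E_def mat_def)
    next
      case jv: False
      show ?thesis
      proof (cases "i = v")
        case False thus ?thesis using LH1[OF False jv] by (simp add: E_def mat_def)
      next
        case iv: True
        have "(L ** H) $ v $ j = (\<Sum>k\<in>UNIV. L $ v $ k * H $ k $ j)"
          by (simp add: matrix_matrix_mult_def)
        also have "\<dots> = (\<Sum>k\<in>UNIV. (- (\<Sum>i'\<in>UNIV - {v}. L $ i' $ k)) * H $ k $ j)"
        proof (intro sum.cong refl)
          fix k
          have "(\<Sum>i'\<in>UNIV. L $ i' $ k) = L $ v $ k + (\<Sum>i'\<in>UNIV - {v}. L $ i' $ k)"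
            by (simp add: sum.remove[of UNIV v])
          hence "L $ v $ k = - (\<Sum>i'\<in>UNIV - {v}. L $ i' $ k)" using Lcol[of k] by linarith
          thus "L $ v $ k * H $ k $ j = (- (\<Sum>i'\<in>UNIV - {v}. L $ i' $ k)) * H $ k $ j" by simp
        qed
        also have "\<dots> = - (\<Sum>i'\<in>UNIV - {v}. (L ** H) $ i' $ j)"
          by (simp add: matrix_matrix_mult_def sum_distrib_right sum_negf[symmetric])
             (rule sum.swap)
        also have "\<dots> = - (\<Sum>i'\<in>UNIV - {v}. (if i' = j then 1 else 0))"
          using LH1 jv by (intro arg_cong[where f=uminus] sum.cong) auto
        also have "\<dots> = -1" using jv by (simp add: sum.delta')
        finally show ?thesis using iv jv by (simp add: E_def mat_def)
      qed
    qed
    thus ?thesis by (simp add: vec_eq_iff)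
  qed
  have Hsym: "transpose H = H"
    using Xsym by (simp add: vec_eq_iff transpose_def H_def)
  have HL: "H ** L = mat 1 - transpose E"
  proof -
    have "H ** L = transpose (L ** H)" by (simp add: matrix_transpose_mul Hsym Lsym)
    also have "\<dots> = transpose (mat 1 - E)" using LH by simp
    also have "\<dots> = mat 1 - transpose E" by (simp add: vec_eq_iff transpose_def mat_def)
    finally show ?thesis .
  qed
  define n where "n = real CARD('n)"
  have npos: "n > 0" unfolding n_def by simp
  define P :: "real^'n^'n" where "P = (\<chi> i j. (if i = j then 1 else 0) - 1 / n)"
  have LP: "L ** P = L"
    by (simp add: vec_eq_iff matrix_matrix_mult_def P_def sum_Pr Lrow)
  have PL: "P ** L = L"
    by (simp add: vec_eq_iff matrix_matrix_mult_def P_def sum_Pl Lcol)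
  have PP: "P ** P = P"
    using npos
    by (simp add: vec_eq_iff matrix_matrix_mult_def P_def sum_Pl sum_subtractf n_def)
  have Pt: "transpose P = P" by (simp add: vec_eq_iff transpose_def P_def)
  have EP: "E ** P = 0"
    using npos
    by (simp add: vec_eq_iff matrix_matrix_mult_def P_def E_def sum_Pr n_def)
  have PEt: "P ** transpose E = 0"
  proof -
    have "P ** transpose E = transpose (E ** P)" using Pt by (simp add: matrix_transpose_mul)
    also have "\<dots> = 0" using EP by (simp add: transpose_def vec_eq_iff)
    finally show ?thesis .
  qed
  define Y where "Y = P ** H ** P"
  have LY: "L ** Y = P"
  proof -
    have "L ** Y = (L ** P) ** H ** P" by (simp add: Y_def matrix_mul_assoc)
    also have "\<dots> = (mat 1 - E) ** P" using LP LH by simp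
    also have "\<dots> = P" using EP by (simp add: matrix_sub_rdistrib)
    finally show ?thesis .
  qed
  have YL: "Y ** L = P"
  proof -
    have "Y ** L = P ** (H ** (P ** L))" by (simp add: Y_def matrix_mul_assoc)
    also have "\<dots> = P ** (mat 1 - transpose E)" using PL HL by simp
    also have "\<dots> = P" using PEt by (simp add: matrix_sub_ldistrib)
    finally show ?thesis .
  qed
  have "is_pinv L Y"
    unfolding is_pinv_def
  proof (intro conjI)
    show "L ** Y ** L = L" using LY PL by simp
    show "Y ** L ** Y = Y" using YL PP by (simp add: Y_def matrix_mul_assoc)
    show "transpose (L ** Y) = L ** Y" using LY Pt by simp
    show "transpose (Y ** L) = Y ** L" using YL Pt by simp
  qed
  hence pY: "pinv L = Y" unfolding pinv_def using pinv_unique by blast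
  have res: "resistance w u v = (if u = v then 0 else X $ u $ u)" for u
  proof -
    define d where "d = unit_vec u - unit_vec v"
    have sd: "(\<Sum>j\<in>UNIV. d $ j) = 0"
      by (simp add: d_def unit_vec_def sum_subtractf)
    have Pd: "P *v d = d"
      by (simp add: vec_eq_iff matrix_vector_mult_def P_def sum_Pl sd)
    have dP: "d v* P = d" using Pd Pt by (metis transpose_matrix_vector)
    have "resistance w u v = d \<bullet> (Y *v d)" unfolding resistance_def d_def L_def[symmetric] pY ..
    also have "Y *v d = P *v (H *v (P *v d))" by (simp add: Y_def matrix_vector_mul_assoc matrix_mul_assoc)
    also have "d \<bullet> (P *v (H *v (P *v d))) = d \<bullet> (H *v d)"
      using Pd dP dot_lmul_matrix[of d P] by metis
    also have "\<dots> = H$u$u - H$u$v - H$v$u + H$v$v" unfolding d_def by (rule quad_unit)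
    finally show ?thesis by (simp add: H_def)
  qed
  have "node_resistance w v = (\<Sum>u\<in>UNIV. (if u = v then 0 else X $ u $ u))"
    unfolding node_resistance_def using res by simp
  also have "\<dots> = (\<Sum>u\<in>UNIV. X $ u $ u) - X $ v $ v"
    by (simp add: sum.remove[of UNIV v] sum.If_cases Diff_eq[symmetric])
  also have "\<dots> = (\<Sum>u\<in>UNIV. X $ u $ u) - 1" using Xv by simp
  finally show ?thesis unfolding X_def .
qed



lemma greedy_abstract:
  fixes R :: "'a set set \<Rightarrow> real" and Ev :: "'a set set"
  assumes fin: "finite Ev"
    and mono1: "\<And>S e. S \<subseteq> Ev \<Longrightarrow> e \<in> Ev \<Longrightarrow> R (insert e S) \<le> R S"
    and supm: "\<And>S e f. S \<subseteq> Ev \<Longrightarrow> e \<in> Ev - S \<Longrightarrow> f \<in> Ev - S \<Longrightarrow> e \<noteq> f \<Longrightarrow>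
                 R (insert f S) - R (insert e (insert f S)) \<le> R S - R (insert e S)"
    and gr: "greedy_run R Ev k es" and kpos: "0 < k"
    and ss: "Sstar \<subseteq> Ev" and cs: "card Sstar \<le> k"
  shows "card (set es) = k \<and> R {} - R (set es) \<ge> (1 - 1 / exp 1) * (R {} - R Sstar)"
proof -
  have len: "length es = k" using gr unfolding greedy_run_def by auto
  have gin: "\<And>i. i < k \<Longrightarrow> es ! i \<in> Ev - set (take i es)" using gr unfolding greedy_run_def by auto
  have gmax: "\<And>i e. i < k \<Longrightarrow> e \<in> Ev - set (take i es) \<Longrightarrow>
      R (set (take i es)) - R (set (take i es) \<union> {e})
        \<le> R (set (take i es)) - R (set (take i es) \<union> {es ! i})"
    using gr unfolding greedy_run_def by auto
  have dist: "distinct es"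
    unfolding distinct_conv_nth
  proof (intro allI impI)
    fix i j assume "i < length es" "j < length es" "i \<noteq> j"
    show "es ! i \<noteq> es ! j"
    proof (cases "i < j")
      case True
      have "es ! i \<in> set (take j es)" using True \<open>j < length es\<close>
        by (metis in_set_conv_nth length_take min.absorb4 nth_take order.strict_trans)
      thus ?thesis using gin[of j] \<open>j < length es\<close> len by auto
    next
      case False
      hence "j < i" using \<open>i \<noteq> j\<close> by simp
      have "es ! j \<in> set (take i es)" using \<open>j < i\<close> \<open>i < length es\<close>
        by (metis in_set_conv_nth length_take min.absorb4 nth_take order.strict_trans)
      thus ?thesis using gin[of i] \<open>i < length es\<close> len by auto
    qed
  qed
  have card: "card (set es) = k" using dist len distinct_card by metis
  have setes: "set es \<subseteq> Ev" using gin len by (metis Diff_iff in_set_conv_nth subsetI)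
  have monoS: "R (A \<union> D) \<le> R A" if "A \<union> D \<subseteq> Ev" for A D
  proof -
    have "finite D" using that fin by (meson infinite_super le_sup_iff)
    thus ?thesis using that
    proof (induction D rule: finite_induct)
      case empty then show ?case by simp
    next
      case (insert f D)
      have "R (A \<union> insert f D) = R (insert f (A \<union> D))" by simp
      also have "\<dots> \<le> R (A \<union> D)" using insert by (intro mono1) auto
      also have "\<dots> \<le> R A" using insert by auto
      finally show ?case .
    qed
  qed
  have dimin: "R (A \<union> D) - R (insert e (A \<union> D)) \<le> R A - R (insert e A)"
    if "A \<union> D \<subseteq> Ev" "e \<in> Ev - (A \<union> D)" for A D e
  proof -
    have "finite D" using that fin by (meson infinite_super le_sup_iff)
    thus ?thesis using that
    proof (induction D rule: finite_induct)
      case empty then show ?case by simp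
    next
      case (insert f D)
      show ?case
      proof (cases "f \<in> A \<union> D")
        case True
        hence "A \<union> insert f D = A \<union> D" by auto
        thus ?thesis using insert by auto
      next
        case False
        have "R (A \<union> insert f D) - R (insert e (A \<union> insert f D))
            = R (insert f (A \<union> D)) - R (insert e (insert f (A \<union> D)))" by simp
        also have "\<dots> \<le> R (A \<union> D) - R (insert e (A \<union> D))"
          using insert False by (intro supm) auto
        also have "\<dots> \<le> R A - R (insert e A)" using insert by auto
        finally show ?thesis .
      qed
    qed
  qed
  have subsum: "R A - R (A \<union> B) \<le> (\<Sum>b\<in>B. R A - R (insert b A))"
    if "A \<subseteq> Ev" "B \<subseteq> Ev" for A B
  proof -
    have "finite B" using that fin by (meson infinite_super)
    thus ?thesis using that
    proof (induction B rule: finite_induct)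
      case empty then show ?case by simp
    next
      case (insert b B)
      have IH: "R A - R (A \<union> B) \<le> (\<Sum>b\<in>B. R A - R (insert b A))" using insert by auto
      have step: "R (A \<union> B) - R (insert b (A \<union> B)) \<le> R A - R (insert b A)"
      proof (cases "b \<in> A")
        case True
        hence "insert b (A \<union> B) = A \<union> B" "insert b A = A" by auto
        thus ?thesis by simp
      next
        case False
        thus ?thesis using insert by (intro dimin) auto
      qed
      have "R A - R (A \<union> insert b B) = (R A - R (A \<union> B)) + (R (A \<union> B) - R (insert b (A \<union> B)))"
        by simp
      also have "\<dots> \<le> (\<Sum>b\<in>B. R A - R (insert b A)) + (R A - R (insert b A))"
        using IH step by linarith
      also have "\<dots> = (\<Sum>b\<in>insert b B. R A - R (insert b A))" using insert by simp
      finally show ?case .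
    qed
  qed
  define S where "S i = set (take i es)" for i
  have Ssub: "S i \<subseteq> Ev" for i using setes unfolding S_def by (meson set_take_subset subset_trans)
  have Ssuc: "S (Suc i) = insert (es ! i) (S i)" if "i < k" for i
    using that len unfolding S_def by (simp add: take_Suc_conv_app_nth)
  define a where "a i = R (S i) - R Sstar" for i
  have kreal: "real k \<ge> 1" using kpos by simp
  have stepa: "a (Suc i) \<le> (1 - 1 / real k) * a i" if "i < k" for i
  proof -
    let ?g = "R (S i) - R (S (Suc i))"
    have gnn: "?g \<ge> 0" using Ssuc[OF that] mono1 Ssub gin[OF that] by auto
    have each: "R (S i) - R (insert b (S i)) \<le> ?g" if "b \<in> Sstar" for b
    proof (cases "b \<in> S i")
      case True then show ?thesis using gnn by (simp add: insert_absorb)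
    next
      case False
      hence "b \<in> Ev - S i" using ss that by auto
      thus ?thesis using gmax[OF \<open>i < k\<close>, of b] Ssuc[OF \<open>i < k\<close>] unfolding S_def by simp
    qed
    have "R (S i) - R Sstar \<le> R (S i) - R (S i \<union> Sstar)"
      using monoS[of Sstar "S i"] Ssub ss by (simp add: Un_commute)
    also have "\<dots> \<le> (\<Sum>b\<in>Sstar. R (S i) - R (insert b (S i)))" using subsum Ssub ss by blast
    also have "\<dots> \<le> (\<Sum>b\<in>Sstar. ?g)" using each by (intro sum_mono) auto
    also have "\<dots> = real (card Sstar) * ?g" by simp
    also have "\<dots> \<le> real k * ?g" using cs gnn by (intro mult_right_mono) auto
    finally have "a i \<le> real k * (a i - a (Suc i))" unfolding a_def by simp
    hence "real k * a (Suc i) \<le> (real k - 1) * a i" by (simp add: algebra_simps)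
    hence "a (Suc i) \<le> ((real k - 1) * a i) / real k" using kreal by (simp add: field_simps)
    also have "\<dots> = (1 - 1 / real k) * a i" using kreal by (simp add: field_simps)
    finally show ?thesis .
  qed
  have pw: "a i \<le> (1 - 1 / real k) ^ i * a 0" if "i \<le> k" for i
    using that
  proof (induction i)
    case 0 then show ?case by simp
  next
    case (Suc i)
    have "a (Suc i) \<le> (1 - 1 / real k) * a i" using stepa Suc by simp
    also have "\<dots> \<le> (1 - 1 / real k) * ((1 - 1 / real k) ^ i * a 0)"
      using Suc kreal by (intro mult_left_mono) (auto simp: field_simps)
    finally show ?case by simp
  qed
  have a0: "a 0 \<ge> 0" using monoS[of "{}" Sstar] ss unfolding a_def S_def by simp
  have "1 - 1 / real k \<le> exp (- (1 / real k))" using exp_ge_add_one_self[of "- (1 / real k)"] by simp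
  hence "(1 - 1 / real k) ^ k \<le> exp (- (1 / real k)) ^ k"
    using kreal by (intro power_mono) (auto simp: field_simps)
  also have "\<dots> = exp (- 1)" using kpos by (simp add: exp_of_nat_mult[symmetric])
  finally have ek: "(1 - 1 / real k) ^ k \<le> exp (- 1)" .
  have "a k \<le> exp (-1) * a 0"
    using pw[of k] mult_right_mono[OF ek a0] by simp
  moreover have "S k = set es" unfolding S_def using len by simp
  ultimately have "R (set es) - R Sstar \<le> exp (-1) * (R {} - R Sstar)"
    unfolding a_def S_def by simp
  hence "R {} - R (set es) \<ge> (1 - exp (-1)) * (R {} - R Sstar)" by (simp add: algebra_simps)
  thus ?thesis using card by (simp add: exp_minus inverse_eq_divide)
qed



lemma add_insert:
  assumes "e \<notin> S"
  shows "add_edges w we (insert e S) a b = add_edges w we S a b + (if a \<noteq> b \<and> {a, b} = e then we e else 0)"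
  using assms unfolding add_edges_def by auto

lemma ag_wg:
  assumes "weighted_graph w" "\<forall>e\<in>S. we e \<ge> 0"
  shows "weighted_graph (add_edges w we S)"
  using assms unfolding weighted_graph_def add_edges_def by (auto simp: insert_commute)

lemma ag_conn:
  assumes "connected_graph w" "weighted_graph w" "\<forall>e\<in>S. we e \<ge> 0"
  shows "connected_graph (add_edges w we S)"
proof -
  have "{(x, y). w x y > 0} \<subseteq> {(x, y). add_edges w we S x y > 0}"
    using assms(3) unfolding add_edges_def by (auto intro: add_pos_nonneg)
  thus ?thesis using assms(1) unfolding connected_graph_def by (meson rtrancl_mono subsetD)
qed

definition Emat :: "'n::finite \<Rightarrow> real^'n^'n" where
  "Emat u = (\<chi> i j. if i = u \<and> j = u then 1 else 0)"

lemma gmat_insert: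
  fixes w :: "'n::finite \<Rightarrow> 'n \<Rightarrow> real"
  assumes uv: "u \<noteq> v" and e: "e = {u, v}" and nS: "e \<notin> S"
  shows "gmat (add_edges w we (insert e S)) v = gmat (add_edges w we S) v + we e *\<^sub>R Emat u"
proof -
  let ?w1 = "add_edges w we S" and ?w2 = "add_edges w we (insert e S)"
  have w2: "?w2 a b = ?w1 a b + (if a \<noteq> b \<and> {a, b} = e then we e else 0)" for a b
    using add_insert[OF nS] by simp
  have rowsum: "(\<Sum>k\<in>UNIV. ?w2 i k) = (\<Sum>k\<in>UNIV. ?w1 i k) + (if i = u then we e else 0)"
    if "i \<noteq> v" for i
  proof -
    have "(\<Sum>k\<in>UNIV. ?w2 i k) = (\<Sum>k\<in>UNIV. ?w1 i k) + (\<Sum>k\<in>UNIV. (if i \<noteq> k \<and> {i, k} = e then we e else 0))"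
      by (simp add: w2 sum.distrib)
    also have "(\<Sum>k\<in>UNIV. (if i \<noteq> k \<and> {i, k} = e then we e else 0)) = (\<Sum>k\<in>UNIV. (if i = u \<and> k = v then we e else 0))"
      using that uv e by (intro sum.cong) (auto simp: doubleton_eq_iff)
    also have "\<dots> = (if i = u then we e else 0)" by simp
    finally show ?thesis .
  qed
  have "gmat ?w2 v $ i $ j = (gmat ?w1 v + we e *\<^sub>R Emat u) $ i $ j" for i j
  proof (cases "i = v \<or> j = v")
    case True
    thus ?thesis using uv by (auto simp: gmat_nth Emat_def)
  next
    case False
    hence "{i, j} \<noteq> e" using e by (auto simp: doubleton_eq_iff)
    thus ?thesis using False rowsum[of i] by (auto simp: gmat_nth Emat_def w2)
  qed
  thus ?thesis by (simp add: vec_eq_iff)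
qed

lemma resolvent_entry:
  fixes A B XA XB :: "real^'n::finite^'n"
  assumes "XA ** A = mat 1" "B ** XB = mat 1" "B = A + c *\<^sub>R Emat u"
  shows "XA $ i $ j - XB $ i $ j = c * XA $ i $ u * XB $ u $ j"
proof -
  have "XA ** (B - A) ** XB = XA ** (B ** XB) - (XA ** A) ** XB"
    by (simp add: matrix_sub_ldistrib matrix_sub_rdistrib matrix_mul_assoc)
  also have "\<dots> = XA - XB" using assms by simp
  finally have D: "XA - XB = XA ** (c *\<^sub>R Emat u) ** XB" using assms(3) by simp
  have "XA $ i $ j - XB $ i $ j = (XA - XB) $ i $ j" by simp
  also have "\<dots> = (XA ** (c *\<^sub>R Emat u) ** XB) $ i $ j" by (simp only: D)
  also have "\<dots> = (\<Sum>k\<in>UNIV. (\<Sum>l\<in>UNIV. XA $ i $ l * (if l = u \<and> k = u then c else 0)) * XB $ k $ j)"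
    by (simp add: matrix_matrix_mult_def Emat_def if_distrib cong: if_cong)
  also have "\<dots> = (\<Sum>k\<in>UNIV. (if k = u then c * XA $ i $ u * XB $ k $ j else 0))"
    by (intro sum.cong) (auto simp: if_distrib cong: if_cong)
  also have "\<dots> = c * XA $ i $ u * XB $ u $ j" by simp
  finally show ?thesis .
qed



theorem theorem3:
  fixes w :: "'n::finite \<Rightarrow> 'n \<Rightarrow> real"
    and v :: 'n
    and Ev :: "'n set set"
    and we :: "'n set \<Rightarrow> real"
    and k :: nat
    and es :: "'n set list"
    and Sstar :: "'n set set"
  assumes "weighted_graph w"
    and "connected_graph w"
    and "\<forall>e\<in>Ev. \<exists>u. u \<noteq> v \<and> e = {u, v} \<and> e \<notin> edges w"
    and "\<forall>e\<in>Ev. we e > 0"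
    and "0 < k" and "k \<le> card Ev"
    and "greedy_run (\<lambda>S. node_resistance (add_edges w we S) v) Ev k es"
    and "Sstar \<subseteq> Ev" and "card Sstar = k"
    and "\<forall>S'. S' \<subseteq> Ev \<and> card S' = k \<longrightarrow>
           node_resistance (add_edges w we Sstar) v \<le> node_resistance (add_edges w we S') v"
  shows "card (set es) = k \<and>
         node_resistance w v - node_resistance (add_edges w we (set es)) v
           \<ge> (1 - 1 / exp 1) * (node_resistance w v - node_resistance (add_edges w we Sstar) v)"
proof -
  note wg = assms(1) and conn = assms(2) and evs = assms(3) and wep = assms(4)
  define R where "R S = node_resistance (add_edges w we S) v" for S
  define X where "X S = matrix_inv (gmat (add_edges w we S) v)" for S
  have WG: "weighted_graph (add_edges w we S)" if "S \<subseteq> Ev" for S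
    by (rule ag_wg[OF wg]) (use wep that in \<open>auto intro: less_imp_le\<close>)
  have CG: "connected_graph (add_edges w we S)" if "S \<subseteq> Ev" for S
    by (rule ag_conn[OF conn wg]) (use wep that in \<open>auto intro: less_imp_le\<close>)
  have NN: "\<forall>a b. add_edges w we S a b \<ge> 0" if "S \<subseteq> Ev" for S
    using WG[OF that] unfolding weighted_graph_def by auto
  have RT: "R S = (\<Sum>i\<in>UNIV. X S $ i $ i) - 1" if "S \<subseteq> Ev" for S
    unfolding R_def X_def using node_res_formula[OF WG[OF that] CG[OF that]] .
  have Xnn: "X S $ i $ j \<ge> 0" if "S \<subseteq> Ev" for S i j
    unfolding X_def using gmat_inv_nonneg[OF CG[OF that] NN[OF that]] .
  have key: "X S $ i $ j - X (insert e S) $ i $ j = we e * X S $ i $ u * X (insert e S) $ u $ j"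
    if "S \<subseteq> Ev" "e \<in> Ev - S" "u \<noteq> v" "e = {u, v}" for S e u i j
  proof -
    have S2: "insert e S \<subseteq> Ev" using that by auto
    have GI: "gmat (add_edges w we (insert e S)) v = gmat (add_edges w we S) v + we e *\<^sub>R Emat u"
      by (rule gmat_insert) (use that in auto)
    show ?thesis unfolding X_def
      using gmat_inv[OF CG[OF that(1)] NN[OF that(1)], of v] gmat_inv[OF CG[OF S2] NN[OF S2], of v]
      by (intro resolvent_entry[where A = "gmat (add_edges w we S) v" and B = "gmat (add_edges w we (insert e S)) v"])
         (simp_all add: GI)
  qed
  have gain: "R S - R (insert e S) = (\<Sum>i\<in>UNIV. we e * X S $ i $ u * X (insert e S) $ u $ i)"
    if "S \<subseteq> Ev" "e \<in> Ev - S" "u \<noteq> v" "e = {u, v}" for S e u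
  proof -
    have S2: "insert e S \<subseteq> Ev" using that by auto
    have "R S - R (insert e S) = (\<Sum>i\<in>UNIV. X S $ i $ i - X (insert e S) $ i $ i)"
      using RT[OF that(1)] RT[OF S2] by (simp add: sum_subtractf)
    also have "\<dots> = (\<Sum>i\<in>UNIV. we e * X S $ i $ u * X (insert e S) $ u $ i)"
      using key[OF that] by simp
    finally show ?thesis .
  qed
  have mono1: "R (insert e S) \<le> R S" if "S \<subseteq> Ev" "e \<in> Ev" for S e
  proof (cases "e \<in> S")
    case True then show ?thesis by (simp add: insert_absorb)
  next
    case False
    have "\<exists>u. u \<noteq> v \<and> e = {u, v} \<and> e \<notin> edges w" using evs that(2) by simp
    then obtain u where u: "u \<noteq> v" "e = {u, v}" by auto
    have S2: "insert e S \<subseteq> Ev" using that by auto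
    have we: "we e \<ge> 0" using wep that by (simp add: less_imp_le)
    have "0 \<le> (\<Sum>i\<in>UNIV. we e * X S $ i $ u * X (insert e S) $ u $ i)"
      using we Xnn[OF that(1)] Xnn[OF S2] by (simp add: sum_nonneg mult_nonneg_nonneg)
    thus ?thesis using gain[OF that(1) _ u] that False by simp
  qed
  have supm: "R (insert f S) - R (insert e (insert f S)) \<le> R S - R (insert e S)"
    if "S \<subseteq> Ev" "e \<in> Ev - S" "f \<in> Ev - S" "e \<noteq> f" for S e f
  proof -
    have "\<exists>u. u \<noteq> v \<and> e = {u, v} \<and> e \<notin> edges w" using evs that(2) by simp
    then obtain u where u: "u \<noteq> v" "e = {u, v}" by auto
    have "\<exists>t. t \<noteq> v \<and> f = {t, v} \<and> f \<notin> edges w" using evs that(3) by simp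
    then obtain t where t: "t \<noteq> v" "f = {t, v}" by auto
    have Sf: "insert f S \<subseteq> Ev" and Se: "insert e S \<subseteq> Ev" and Sef: "insert e (insert f S) \<subseteq> Ev"
      using that by auto
    have wf: "we f \<ge> 0" using wep that(3) by (simp add: less_imp_le)
    have c1: "X (insert f S) $ i $ u \<le> X S $ i $ u" for i
    proof -
      have "0 \<le> we f * X S $ i $ t * X (insert f S) $ t $ u"
        using wf Xnn[OF that(1)] Xnn[OF Sf] by (simp add: mult_nonneg_nonneg)
      thus ?thesis using key[OF that(1) that(3) t, of i u] by linarith
    qed
    have c2: "X (insert e (insert f S)) $ u $ i \<le> X (insert e S) $ u $ i" for i
    proof -
      have "insert e (insert f S) = insert f (insert e S)" by auto
      moreover have "f \<in> Ev - insert e S" using that by auto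
      moreover have "0 \<le> we f * X (insert e S) $ u $ t * X (insert f (insert e S)) $ t $ i"
        using wf Xnn[OF Se] Xnn[OF Sef] \<open>insert e (insert f S) = insert f (insert e S)\<close>
        by (simp add: mult_nonneg_nonneg)
      ultimately show ?thesis
        using key[OF Se _ t, of u i] by simp
    qed
    have "R (insert f S) - R (insert e (insert f S))
        = (\<Sum>i\<in>UNIV. we e * X (insert f S) $ i $ u * X (insert e (insert f S)) $ u $ i)"
      using that by (intro gain[OF Sf _ u]) auto
    also have "\<dots> \<le> (\<Sum>i\<in>UNIV. we e * X S $ i $ u * X (insert e S) $ u $ i)"
    proof (intro sum_mono)
      fix i
      have "X (insert f S) $ i $ u * X (insert e (insert f S)) $ u $ i \<le> X S $ i $ u * X (insert e S) $ u $ i"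
        using c1 c2 Xnn[OF Sf] Xnn[OF Sef] Xnn[OF that(1)] by (intro mult_mono) auto
      moreover have "we e \<ge> 0" using wep that by (simp add: less_imp_le)
      ultimately show "we e * X (insert f S) $ i $ u * X (insert e (insert f S)) $ u $ i
          \<le> we e * X S $ i $ u * X (insert e S) $ u $ i"
        by (simp add: mult.assoc mult_left_mono)
    qed
    also have "\<dots> = R S - R (insert e S)" using gain[OF that(1) that(2) u] by simp
    finally show ?thesis .
  qed
  have fin: "finite Ev" by (rule finite_subset[of _ UNIV]) auto
  have gr: "greedy_run R Ev k es" using assms(7) unfolding R_def .
  have e0: "add_edges w we {} = w" unfolding add_edges_def by simp
  have "card (set es) = k \<and> R {} - R (set es) \<ge> (1 - 1 / exp 1) * (R {} - R Sstar)"
    by (rule greedy_abstract[OF fin mono1 supm gr assms(5) assms(8)]) (use assms(9) in auto)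
  thus ?thesis unfolding R_def e0 .
qed

end
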